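(* Let $\lambda>0$ and $X\sim\mathrm{ZTP}(\lambda)$. Then the Gini coefficient of $X$ is $$G = 1 - \frac{2e^{-\lambda}}{1-e^{-\lambda}}\int_0^\lambda I_0\big(2\sqrt{\lambda t}\big)\,e^{-t}\,dt + \frac{e^{-2\lambda}}{1-e^{-\lambda}}\, I_1(2\lambda).$$
   Context: A random variable $X$ has the zero-truncated Poisson distribution with parameter $\lambda>0$, written $X\sim\mathrm{ZTP}(\lambda)$, if $P_\lambda(k)=\mathbb{P}(X=k)=\frac{1}{1-e^{-\lambda}}\cdot\frac{e^{-\lambda}\lambda^k}{k!}$ for $k=1,2,\ldots$. Its mean is $\mu=\lambda/(1-e^{-\lambda})$. The Gini coefficient of a random variable $X$ with finite mean is $G=\frac12\,\mathbb{E}|X_1-X_2|/\mathbb{E}(X)$, where $X_1,X_2$ are independent copies of $X$. $I_\nu(z)=(z/2)^\nu\sum_{k\ge0}(z/2)^{2k}/[k!\,\Gamma(\nu+k+1)]$ is the modified Bessel function of the first kind of order $\nu$. *)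

theory Defs
  imports "HOL-Probability.Probability"
begin

definition ztp_density :: "real \<Rightarrow> nat \<Rightarrow> real" where
  "ztp_density lam k =
     (if k \<ge> 1 then (1 / (1 - exp (- lam))) * (exp (- lam) * lam ^ k / fact k) else 0)"

definition ztp_pmf :: "real \<Rightarrow> nat pmf" where
  "ztp_pmf lam = embed_pmf (ztp_density lam)"

definition gini :: "nat pmf \<Rightarrow> real" where
  "gini p = (1/2) * measure_pmf.expectation (pair_pmf p p) (\<lambda>(a, b). \<bar>real a - real b\<bar>)
              / measure_pmf.expectation p real"

definition bessel_I :: "nat \<Rightarrow> real \<Rightarrow> real" where
  "bessel_I n z = (z/2) ^ n * (\<Sum>k. (z/2) ^ (2*k) / (fact k * Gamma (real n + real k + 1)))"

end

theory Submission
  imports Defs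
begin


definition pp :: "real \<Rightarrow> nat \<Rightarrow> real" where
  "pp l k = exp (- l) * l ^ k / fact k"

definition LL :: "real \<Rightarrow> nat \<Rightarrow> real" where
  "LL l n = (\<Sum>k<n. pp l k)"

lemma pp_sums: "pp l sums 1"
proof -
  have "(\<lambda>n. exp (-l) * (l^n /\<^sub>R fact n)) sums (exp (-l) * exp l)"
    by (intro sums_mult exp_converges)
  moreover have "pp l = (\<lambda>n. exp (-l) * (l^n /\<^sub>R fact n))"
    by (simp add: fun_eq_iff pp_def divide_inverse)
  moreover have "exp (-l) * exp l = 1" by (simp add: exp_minus)
  ultimately show ?thesis by simp
qed

lemma pp_Suc: "real (Suc k) * pp l (Suc k) = l * pp l k"
  unfolding pp_def fact_Suc of_nat_mult by (simp add: field_simps del: of_nat_Suc)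

lemma pp_mean_sums: "(\<lambda>k. real k * pp l k) sums l"
proof -
  have "(\<lambda>k. l * pp l k) sums (l * 1)" by (intro sums_mult pp_sums)
  moreover have "(\<lambda>k. real (Suc k) * pp l (Suc k)) = (\<lambda>k. l * pp l k)" by (simp only: pp_Suc)
  ultimately have "(\<lambda>k. real (Suc k) * pp l (Suc k)) sums l" by simp
  then show ?thesis by (subst (asm) sums_Suc_iff) simp
qed

lemma pp_nonneg: "l \<ge> 0 \<Longrightarrow> pp l k \<ge> 0"
  by (simp add: pp_def)

lemma pp_le1: "l \<ge> 0 \<Longrightarrow> pp l k \<le> 1"
proof -
  assume l: "l \<ge> 0"
  have "sum (pp l) {k} \<le> suminf (pp l)"
    by (rule sum_le_suminf) (use pp_sums l pp_nonneg in \<open>auto simp: sums_iff\<close>)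
  then show ?thesis using pp_sums by (simp add: sums_iff)
qed

lemma LL_lim: "LL l \<longlonglongrightarrow> 1"
  using pp_sums unfolding sums_def LL_def .

lemma LL_Suc: "LL l (Suc n) = LL l n + pp l n"
  by (simp add: LL_def)

lemma LL_bounds: "l \<ge> 0 \<Longrightarrow> 0 \<le> LL l n \<and> LL l n \<le> 1"
proof -
  assume l: "l \<ge> 0"
  have "0 \<le> LL l n" unfolding LL_def by (intro sum_nonneg) (simp add: pp_nonneg l)
  moreover have "LL l n \<le> suminf (pp l)" unfolding LL_def
    by (rule sum_le_suminf) (use pp_sums l pp_nonneg in \<open>auto simp: sums_iff\<close>)
  ultimately show ?thesis using pp_sums by (simp add: sums_iff)
qed

lemma summable_le_pp:
  assumes l: "l \<ge> 0" and "\<And>k. \<bar>f k\<bar> \<le> pp l k" shows "summable f"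
  by (rule summable_comparison_test[of _ "pp l"]) (use assms pp_sums in \<open>auto simp: sums_iff\<close>)

definition EE where "EE l = (\<Sum>k. pp l k * pp l k)"
definition FF where "FF l = (\<Sum>k. pp l k * pp l (Suc k))"
definition AA where "AA l = (\<Sum>k. pp l k * LL l (Suc k))"

lemma EE_sums: "l \<ge> 0 \<Longrightarrow> (\<lambda>k. pp l k * pp l k) sums EE l"
  unfolding EE_def
  by (intro summable_sums summable_le_pp[of l]) (auto simp: pp_nonneg pp_le1 mult_left_le)

lemma FF_sums: "l \<ge> 0 \<Longrightarrow> (\<lambda>k. pp l k * pp l (Suc k)) sums FF l"
  unfolding FF_def
  by (intro summable_sums summable_le_pp[of l]) (auto simp: pp_nonneg pp_le1 mult_left_le)

lemma AA_sums: "l \<ge> 0 \<Longrightarrow> (\<lambda>k. pp l k * LL l (Suc k)) sums AA l"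
  unfolding AA_def
  by (intro summable_sums summable_le_pp[of l]) (auto simp: pp_nonneg LL_bounds mult_left_le)

lemma AA_eq: assumes l: "l \<ge> 0" shows "2 * AA l = 1 + EE l"
proof -
  have "(\<lambda>n. (LL l n)^2) \<longlonglongrightarrow> 1^2" by (intro tendsto_intros LL_lim)
  then have t: "(\<lambda>n. (LL l (Suc n))^2 - (LL l n)^2) sums (1 - 0)"
    using telescope_sums[of "\<lambda>n. (LL l n)^2" 1] by (simp add: LL_def)
  have "(\<lambda>n. ((LL l (Suc n))^2 - (LL l n)^2) + pp l n * pp l n) sums (1 + EE l)"
    using sums_add[OF t EE_sums[OF l]] by simp
  moreover have "(\<lambda>n. ((LL l (Suc n))^2 - (LL l n)^2) + pp l n * pp l n) = (\<lambda>k. 2 * (pp l k * LL l (Suc k)))"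
    by (auto simp: LL_Suc power2_eq_square algebra_simps)
  moreover have "(\<lambda>k. 2 * (pp l k * LL l (Suc k))) sums (2 * AA l)"
    by (intro sums_mult AA_sums l)
  ultimately show ?thesis using sums_unique2 by metis
qed

definition ss where "ss l j = (\<Sum>k<j. pp l k * (real j - real k))"

lemma mean_partial: "(\<Sum>k<Suc i. real k * pp l k) = l * LL l i"
proof (induction i)
  case 0 then show ?case by (simp add: LL_def)
next
  case (Suc i)
  have "(\<Sum>k<Suc (Suc i). real k * pp l k) = (\<Sum>k<Suc i. real k * pp l k) + real (Suc i) * pp l (Suc i)"
    by (simp only: sum.lessThan_Suc)
  also have "\<dots> = l * LL l i + real (Suc i) * pp l (Suc i)"
    by (simp only: Suc.IH)
  also have "\<dots> = l * LL l (Suc i)" by (simp only: pp_Suc LL_Suc algebra_simps)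
  finally show ?case .
qed

lemma ss_Suc: "pp l (Suc i) * ss l (Suc i) = l * (pp l i * LL l (Suc i) - pp l (Suc i) * LL l i)"
proof -
  have "ss l (Suc i) = real (Suc i) * LL l (Suc i) - (\<Sum>k<Suc i. real k * pp l k)"
    unfolding ss_def LL_def by (simp add: algebra_simps sum_subtractf sum_distrib_left)
  also have "\<dots> = real (Suc i) * LL l (Suc i) - l * LL l i" by (simp only: mean_partial)
  finally have eq: "ss l (Suc i) = real (Suc i) * LL l (Suc i) - l * LL l i" .
  have "pp l (Suc i) * ss l (Suc i) = (real (Suc i) * pp l (Suc i)) * LL l (Suc i) - l * pp l (Suc i) * LL l i"
    unfolding eq by (simp only: algebra_simps)
  also have "\<dots> = (l * pp l i) * LL l (Suc i) - l * pp l (Suc i) * LL l i"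
    by (simp only: pp_Suc)
  finally show ?thesis by (simp only: algebra_simps)
qed

lemma WW_sums: assumes l: "l \<ge> 0" shows "(\<lambda>j. pp l j * ss l j) sums (l * (EE l + FF l))"
proof -
  have pl: "pp l \<longlonglongrightarrow> 0" using pp_sums summable_LIMSEQ_zero sums_summable by blast
  have "(\<lambda>n. pp l n * LL l (Suc n)) \<longlonglongrightarrow> 0 * 1"
    by (intro tendsto_intros pl) (use LL_lim LIMSEQ_Suc in blast)
  then have t: "(\<lambda>n. pp l n * LL l (Suc n) - pp l (Suc n) * LL l (Suc (Suc n))) sums (pp l 0 * LL l 1 - 0)"
    using telescope_sums'[of "\<lambda>n. pp l n * LL l (Suc n)" 0] by simp
  have e: "(\<lambda>n. pp l (Suc n) * pp l (Suc n)) sums (EE l - pp l 0 * pp l 0)"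
    using EE_sums[OF l] by (subst sums_Suc_iff) simp
  have "(\<lambda>n. l * ((pp l n * LL l (Suc n) - pp l (Suc n) * LL l (Suc (Suc n)))
          + pp l (Suc n) * pp l (Suc n) + pp l n * pp l (Suc n)))
        sums (l * ((pp l 0 * LL l 1 - 0) + (EE l - pp l 0 * pp l 0) + FF l))"
    by (intro sums_mult sums_add t e FF_sums l)
  moreover have "LL l 1 = pp l 0" by (simp add: LL_def)
  moreover have "(\<lambda>n. l * ((pp l n * LL l (Suc n) - pp l (Suc n) * LL l (Suc (Suc n)))
          + pp l (Suc n) * pp l (Suc n) + pp l n * pp l (Suc n))) = (\<lambda>i. pp l (Suc i) * ss l (Suc i))"
    by (auto simp: ss_Suc LL_Suc algebra_simps)
  ultimately have "(\<lambda>i. pp l (Suc i) * ss l (Suc i)) sums (l * (EE l + FF l))" by simp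
  then show ?thesis by (subst (asm) sums_Suc_iff) (simp add: ss_def)
qed



lemma antideriv:
  "((\<lambda>t. - fact k * exp (-t) * (\<Sum>m\<le>k. t^m / fact m)) has_real_derivative exp (-t) * t^k) (at t)"
proof (induction k)
  case 0
  show ?case by (auto intro!: derivative_eq_intros)
next
  case (Suc k)
  have eq: "(\<lambda>t. - fact (Suc k) * exp (-t) * (\<Sum>m\<le>Suc k. t^m / fact m)) =
     (\<lambda>t. real (Suc k) * (- fact k * exp (-t) * (\<Sum>m\<le>k. t^m / fact m)) - exp (-t) * t^(Suc k))"
  proof
    fix t :: real
    have gen: "\<And>F e S x::real. - F * e * (S + x) = - (F * x) * e - F * e * S" by algebra
    define S where "S = (\<Sum>m\<le>k. t^m / fact m)"
    have h1: "fact (Suc k) * (t^Suc k / fact (Suc k)) = (t^Suc k :: real)" by simp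
    have h2: "(fact (Suc k) :: real) = real (Suc k) * fact k" by (simp only: fact_Suc of_nat_mult)
    have "- fact (Suc k) * exp (-t) * (\<Sum>m\<le>Suc k. t^m / fact m) =
       - fact (Suc k) * exp (-t) * (S + t^Suc k / fact (Suc k))" by (simp add: S_def)
    also have "\<dots> = - (fact (Suc k) * (t^Suc k / fact (Suc k))) * exp (-t) - fact (Suc k) * exp (-t) * S"
      by (rule gen)
    also have "\<dots> = real (Suc k) * (- fact k * exp (-t) * S) - exp (-t) * t^(Suc k)"
      unfolding h1 unfolding h2 by (simp only: algebra_simps)
    finally show "- fact (Suc k) * exp (-t) * (\<Sum>m\<le>Suc k. t^m / fact m) =
       real (Suc k) * (- fact k * exp (-t) * (\<Sum>m\<le>k. t^m / fact m)) - exp (-t) * t^(Suc k)"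
      by (simp add: S_def)
  qed
  have d1: "((\<lambda>t. real (Suc k) * (- fact k * exp (-t) * (\<Sum>m\<le>k. t^m / fact m))) has_real_derivative real (Suc k) * (exp (-t) * t^k)) (at t)"
    by (rule DERIV_cmult[OF Suc.IH])
  have d2: "((\<lambda>t. exp (-t) * t^(Suc k)) has_real_derivative ((- exp (-t)) * t^Suc k + exp (-t) * (real (Suc k) * t^k))) (at t)"
    apply (auto intro!: derivative_eq_intros)
    apply (cases k) apply (auto simp: algebra_simps)
    done
  show ?case unfolding eq
    by (rule DERIV_cong[OF DERIV_diff[OF d1 d2]]) (simp add: algebra_simps)
qed

lemma term_integral:
  fixes b :: real
  assumes b: "b \<ge> 0"
  shows "((\<lambda>t. exp (-t) * t^k) has_integral (fact k * (1 - exp (-b) * (\<Sum>m\<le>k. b^m / fact m)))) {0..b}"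
proof -
  have z: "(\<Sum>m\<le>k. (0::real)^m / fact m) = 1" by (induction k) auto
  have "((\<lambda>t. exp (-t) * t^k) has_integral
      ((- fact k * exp (-b) * (\<Sum>m\<le>k. b^m / fact m)) - (- fact k * exp (-0) * (\<Sum>m\<le>k. 0^m / fact m)))) {0..b}"
    apply (rule fundamental_theorem_of_calculus[of 0 b "\<lambda>t. - fact k * exp (-t) * (\<Sum>m\<le>k. t^m / fact m)" "\<lambda>t. exp (-t) * t^k"])
    using b apply simp
    apply (rule has_real_derivative_iff_has_vector_derivative[THEN iffD1])
    apply (rule has_field_derivative_at_within)
    apply (rule antideriv)
    done
  then show ?thesis using z by (simp add: algebra_simps)
qed



lemma bessel0_sums:
  assumes x: "x \<ge> 0"
  shows "(\<lambda>k. x^k / (fact k * fact k)) sums bessel_I 0 (2 * sqrt x)"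
proof -
  have sm: "summable (\<lambda>k. x^k / (fact k * fact k))"
  proof (rule summable_comparison_test[of _ "\<lambda>k. x^k /\<^sub>R fact k"])
    show "summable (\<lambda>k. x^k /\<^sub>R fact k)" using exp_converges sums_summable by blast
    have "x^k / (fact k * fact k) \<le> x^k / fact k" for k
      using x by (intro divide_left_mono) (auto simp: fact_ge_1 intro: order_trans[OF _ mult_right_mono[of 1 "fact k" "fact k"]])
    then show "\<exists>N. \<forall>n\<ge>N. norm (x^n / (fact n * fact n)) \<le> x^n /\<^sub>R fact n"
      using x by (intro exI[of _ 0]) (auto simp: divide_inverse mult.commute)
  qed
  have eq: "(2 * sqrt x / 2) ^ (2 * k) / (fact k * Gamma (real 0 + real k + 1)) = x^k / (fact k * fact k)" for k
  proof -
    have "(2 * sqrt x / 2) ^ (2 * k) = ((sqrt x)^2)^k" by (simp add: power_mult)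
    also have "\<dots> = x^k" using x by simp
    finally show ?thesis using Gamma_fact[of k, where 'a=real] by (simp add: add.commute)
  qed
  show ?thesis using sm unfolding bessel_I_def eq by (simp add: summable_sums)
qed

lemma bessel1_eq:
  fixes l :: real
  assumes l: "l > 0"
  shows "exp (-l) * exp (-l) * bessel_I 1 (2 * l) = FF l"
proof -
  have eq: "(2 * l / 2) ^ (2 * k) / (fact k * Gamma (real 1 + real k + 1)) = l^(2*k) / (fact k * fact (Suc k))" for k
    using Gamma_fact[of "Suc k", where 'a=real] by (simp add: add.commute add.left_commute)
  have "(\<lambda>k. pp l k * pp l (Suc k) / (exp (-l) * exp (-l) * l)) sums (FF l / (exp (-l) * exp (-l) * l))"
    using FF_sums l by (intro sums_divide) auto
  moreover have "(\<lambda>k. pp l k * pp l (Suc k) / (exp (-l) * exp (-l) * l)) = (\<lambda>k. l^(2*k) / (fact k * fact (Suc k)))"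
    using l by (auto simp: fun_eq_iff pp_def power_add[symmetric] mult_2 simp del: fact_Suc)
  ultimately have "(\<lambda>k. l^(2*k) / (fact k * fact (Suc k))) sums (FF l / (exp (-l) * exp (-l) * l))" by simp
  then show ?thesis unfolding bessel_I_def eq using l by (simp add: sums_iff)
qed



lemma integral_part:
  fixes l :: real
  assumes l: "l > 0"
  shows "exp (-l) * integral {0..l} (\<lambda>t. bessel_I 0 (2 * sqrt (l * t)) * exp (- t)) = 1 - AA l"
proof -
  define tm where "tm k t = l^k / (fact k * fact k) * (exp (-t) * t^k)" for k t
  define c where "c k = l^k / fact k * (1 - LL l (Suc k))" for k
  define g where "g t = bessel_I 0 (2 * sqrt (l * t)) * exp (- t)" for t
  define f where "f n t = (\<Sum>k<n. tm k t)" for n t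
  have LLe: "LL l (Suc k) = exp (-l) * (\<Sum>m\<le>k. l^m / fact m)" for k
    unfolding LL_def pp_def lessThan_Suc_atMost by (simp add: sum_distrib_left)
  have tmi: "(tm k has_integral c k) {0..l}" for k
  proof -
    have "((\<lambda>t. l^k / (fact k * fact k) * (exp (-t) * t^k)) has_integral
        l^k / (fact k * fact k) * (fact k * (1 - exp (-l) * (\<Sum>m\<le>k. l^m / fact m)))) {0..l}"
      by (intro has_integral_mult_right term_integral) (use l in simp)
    then show ?thesis unfolding tm_def c_def LLe by simp
  qed
  have fi: "(f n has_integral (\<Sum>k<n. c k)) {0..l}" for n
    unfolding f_def by (intro has_integral_sum tmi) auto
  have c_sums: "c sums suminf c"
  proof (rule summable_sums, rule summable_comparison_test[of _ "\<lambda>k. l^k /\<^sub>R fact k"])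
    show "summable (\<lambda>k. l^k /\<^sub>R fact k)" using exp_converges sums_summable by blast
    have "\<bar>c n\<bar> \<le> l^n /\<^sub>R fact n" for n
    proof -
      have b: "0 \<le> 1 - LL l (Suc n)" "1 - LL l (Suc n) \<le> 1" using LL_bounds[of l "Suc n"] l by auto
      have "c n \<ge> 0" unfolding c_def using l b by simp
      moreover have "c n \<le> l^n / fact n" unfolding c_def using l b
        by (intro mult_left_le) auto
      ultimately show ?thesis by (simp add: divide_inverse mult.commute)
    qed
    then show "\<exists>N. \<forall>n\<ge>N. norm (c n) \<le> l^n /\<^sub>R fact n" by auto
  qed
  have tm_nonneg: "t \<ge> 0 \<Longrightarrow> tm k t \<ge> 0" for k t
    unfolding tm_def using l by simp
  have mc: "g integrable_on {0..l} \<and> ((\<lambda>n. integral {0..l} (f n)) \<longlonglongrightarrow> integral {0..l} g)"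
  proof (rule monotone_convergence_increasing)
    show "f n integrable_on {0..l}" for n using fi by blast
    show "f n t \<le> f (Suc n) t" if "t \<in> {0..l}" for n t
      using tm_nonneg[of t n] that unfolding f_def by simp
    show "(\<lambda>n. f n t) \<longlonglongrightarrow> g t" if "t \<in> {0..l}" for t
    proof -
      have lt: "l * t \<ge> 0" using that l by simp
      have s: "(\<lambda>k. (l * t)^k / (fact k * fact k) * exp (-t)) sums (bessel_I 0 (2 * sqrt (l * t)) * exp (-t))"
        by (intro sums_mult2 bessel0_sums lt)
      have e: "(\<lambda>k. (l * t)^k / (fact k * fact k) * exp (-t)) = (\<lambda>k. tm k t)"
        by (auto simp: fun_eq_iff tm_def power_mult_distrib)
      from s[unfolded e] show ?thesis unfolding f_def g_def sums_def .
    qed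
    have "(\<lambda>n. integral {0..l} (f n)) = (\<lambda>n. \<Sum>k<n. c k)" using fi by (auto simp: fun_eq_iff integral_unique)
    then show "bounded (range (\<lambda>n. integral {0..l} (f n)))"
      using c_sums unfolding sums_def by (auto intro: convergent_imp_bounded)
  qed
  have "(\<lambda>n. integral {0..l} (f n)) = (\<lambda>n. \<Sum>k<n. c k)" using fi by (auto simp: fun_eq_iff integral_unique)
  with mc c_sums have ig: "integral {0..l} g = suminf c"
    unfolding sums_def using LIMSEQ_unique by auto
  have "(\<lambda>k. pp l k * 1 - pp l k * LL l (Suc k)) sums (1 - AA l)"
    using sums_diff[OF pp_sums AA_sums] l by simp
  moreover have "(\<lambda>k. pp l k * 1 - pp l k * LL l (Suc k)) = (\<lambda>k. exp (-l) * c k)"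
    by (auto simp: fun_eq_iff pp_def c_def field_simps)
  ultimately have "(\<lambda>k. exp (-l) * c k) sums (1 - AA l)" by simp
  moreover have "(\<lambda>k. exp (-l) * c k) sums (exp (-l) * suminf c)" by (intro sums_mult c_sums)
  ultimately show ?thesis using ig unfolding g_def using sums_unique2 by metis
qed



lemma nn_sum:
  fixes M :: "nat pmf"
  assumes "\<And>k. f k \<ge> 0" "(\<lambda>k. pmf M k * f k) sums s"
  shows "(\<integral>\<^sup>+x. ennreal (f x) \<partial>M) = ennreal s"
proof -
  have "(\<integral>\<^sup>+x. ennreal (f x) \<partial>M) = (\<integral>\<^sup>+x. ennreal (pmf M x * f x) \<partial>count_space UNIV)"
    unfolding nn_integral_measure_pmf by (intro nn_integral_cong) (simp add: ennreal_mult assms(1))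
  also have "\<dots> = (\<Sum>x. ennreal (pmf M x * f x))" by (rule nn_integral_count_space_nat)
  also have "\<dots> = ennreal s" by (rule suminf_ennreal_eq) (use assms in auto)
  finally show ?thesis .
qed

lemma exp_sum:
  fixes M :: "nat pmf"
  assumes "\<And>k. f k \<ge> 0" "(\<lambda>k. pmf M k * f k) sums s"
  shows "measure_pmf.expectation M f = s"
proof -
  have "s \<ge> 0" using assms by (intro sums_le[OF _ sums_zero assms(2)]) auto
  moreover have "measure_pmf.expectation M f = enn2real (\<integral>\<^sup>+x. ennreal (f x) \<partial>M)"
    by (rule integral_eq_nn_integral) (use assms in auto)
  ultimately show ?thesis using nn_sum[OF assms] by simp
qed



lemma main_calc:
  fixes l :: real
  assumes l: "l > 0"
  defines "q \<equiv> exp (- l)" and "c \<equiv> 1 / (1 - exp (- l))"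
  shows "gini (ztp_pmf l) = c * (EE l + FF l - q)"
proof -
  have q: "0 < q" "q < 1" unfolding q_def using l by auto
  have c1: "c * (1 - q) = 1" unfolding c_def q_def using q q_def by simp
  have cpos: "c > 0" unfolding c_def using q q_def by simp
  define d where "d k = (if k \<ge> 1 then c * pp l k else 0)" for k
  have dd: "ztp_density l = d" by (auto simp: fun_eq_iff ztp_density_def d_def c_def pp_def)
  have dnn: "d k \<ge> 0" for k unfolding d_def using cpos pp_nonneg[of l] l by simp
  have pp0: "pp l 0 = q" by (simp add: pp_def q_def)
  have dsum: "d sums 1"
  proof -
    have "(\<lambda>k. c * pp l k - (if k = 0 then c * q else 0)) sums (c * 1 - c * q)"
      by (intro sums_diff sums_mult pp_sums sums_single)
    moreover have "(\<lambda>k. c * pp l k - (if k = 0 then c * q else 0)) = d"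
      by (auto simp: fun_eq_iff d_def pp0 Suc_le_eq)
    moreover have "c * 1 - c * q = 1" using c1 by (simp add: algebra_simps)
    ultimately show ?thesis by simp
  qed
  have pmfd: "pmf (ztp_pmf l) k = d k" for k
  proof -
    have "(\<integral>\<^sup>+x. ennreal (d x) \<partial>count_space UNIV) = (\<Sum>x. ennreal (d x))"
      by (rule nn_integral_count_space_nat)
    also have "\<dots> = ennreal 1" by (rule suminf_ennreal_eq[OF dnn dsum])
    finally have "(\<integral>\<^sup>+x. ennreal (d x) \<partial>count_space UNIV) = 1" by simp
    then show ?thesis unfolding ztp_pmf_def dd by (subst pmf_embed_pmf) (use dnn in auto)
  qed
  have mean: "measure_pmf.expectation (ztp_pmf l) real = c * l"
  proof (rule exp_sum)
    have "(\<lambda>k. c * (real k * pp l k)) sums (c * l)" by (intro sums_mult pp_mean_sums)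
    moreover have "(\<lambda>k. c * (real k * pp l k)) = (\<lambda>k. pmf (ztp_pmf l) k * real k)"
      by (auto simp: fun_eq_iff pmfd d_def)
    ultimately show "(\<lambda>k. pmf (ztp_pmf l) k * real k) sums (c * l)" by simp
  qed simp
  define v where "v a = c * (l - real a + 2 * ss l a - q * real a)" for a :: nat
  have inner: "(\<lambda>k. d k * \<bar>real a - real k\<bar>) sums v a" for a
  proof -
    have s1: "(\<lambda>k. (if k < a then pp l k * (real a - real k) else 0)) sums ss l a"
    proof -
      have "(\<lambda>k. (if k < a then pp l k * (real a - real k) else 0)) sums (\<Sum>k\<in>{..<a}. (if k < a then pp l k * (real a - real k) else 0))"
        by (rule sums_finite) auto
      then show ?thesis by (simp add: ss_def)
    qed
    have "(\<lambda>k. c * ((real k * pp l k - pp l k * real a) + 2 * (if k < a then pp l k * (real a - real k) else 0)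
            - (if k = 0 then q * real a else 0)))
          sums (c * ((l - 1 * real a) + 2 * ss l a - q * real a))"
      by (intro sums_mult sums_diff sums_add pp_mean_sums sums_mult2 pp_sums s1 sums_single)
    moreover have "(\<lambda>k. c * ((real k * pp l k - pp l k * real a) + 2 * (if k < a then pp l k * (real a - real k) else 0)
            - (if k = 0 then q * real a else 0))) = (\<lambda>k. d k * \<bar>real a - real k\<bar>)"
    proof
      fix k
      show "c * ((real k * pp l k - pp l k * real a) + 2 * (if k < a then pp l k * (real a - real k) else 0)
            - (if k = 0 then q * real a else 0)) = d k * \<bar>real a - real k\<bar>"
      proof (cases "k = 0")
        case True then show ?thesis by (cases "a = 0") (auto simp: d_def pp0 algebra_simps)
      next
        case False then show ?thesis by (cases "k < a") (auto simp: d_def algebra_simps)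
      qed
    qed
    ultimately show ?thesis by (simp add: v_def)
  qed
  have vnn: "v a \<ge> 0" for a
    using sums_le[OF _ sums_zero inner[of a]] dnn by (simp add: mult_nonneg_nonneg)
  define N where "N = c * c * (2 * l * (EE l + FF l) - 2 * q * l)"
  have outer: "(\<lambda>a. d a * v a) sums N"
  proof -
    have "(\<lambda>a. c * c * ((l * pp l a - real a * pp l a - q * (real a * pp l a)) + 2 * (pp l a * ss l a)
             - (if a = 0 then q * l else 0)))
          sums (c * c * ((l * 1 - l - q * l) + 2 * (l * (EE l + FF l)) - q * l))"
      using l by (intro sums_mult sums_diff sums_add pp_mean_sums pp_sums WW_sums sums_single) auto
    moreover have "(\<lambda>a. c * c * ((l * pp l a - real a * pp l a - q * (real a * pp l a)) + 2 * (pp l a * ss l a)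
             - (if a = 0 then q * l else 0))) = (\<lambda>a. d a * v a)"
      by (auto simp: fun_eq_iff d_def v_def pp0 ss_def Suc_le_eq algebra_simps)
    ultimately show ?thesis by (simp add: N_def algebra_simps)
  qed
  have pair: "measure_pmf.expectation (pair_pmf (ztp_pmf l) (ztp_pmf l)) (\<lambda>(a, b). \<bar>real a - real b\<bar>) = N"
  proof -
    have Nnn: "N \<ge> 0" using sums_le[OF _ sums_zero outer] dnn vnn by simp
    have "measure_pmf.expectation (pair_pmf (ztp_pmf l) (ztp_pmf l)) (\<lambda>(a, b). \<bar>real a - real b\<bar>)
        = enn2real (\<integral>\<^sup>+x. ennreal ((\<lambda>(a, b). \<bar>real a - real b\<bar>) x) \<partial>pair_pmf (ztp_pmf l) (ztp_pmf l))"
      by (rule integral_eq_nn_integral) auto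
    also have "(\<integral>\<^sup>+x. ennreal ((\<lambda>(a, b). \<bar>real a - real b\<bar>) x) \<partial>pair_pmf (ztp_pmf l) (ztp_pmf l))
        = (\<integral>\<^sup>+a. \<integral>\<^sup>+b. ennreal \<bar>real a - real b\<bar> \<partial>ztp_pmf l \<partial>ztp_pmf l)"
      by (subst nn_integral_pair_pmf') simp
    also have "\<dots> = (\<integral>\<^sup>+a. ennreal (v a) \<partial>ztp_pmf l)"
    proof (rule nn_integral_cong)
      fix a
      show "(\<integral>\<^sup>+b. ennreal \<bar>real a - real b\<bar> \<partial>ztp_pmf l) = ennreal (v a)"
        by (rule nn_sum) (use inner[of a] in \<open>auto simp: pmfd\<close>)
    qed
    also have "\<dots> = ennreal N"
      by (rule nn_sum) (use outer vnn in \<open>auto simp: pmfd\<close>)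
    finally show ?thesis using Nnn by simp
  qed
  show ?thesis unfolding gini_def pair mean N_def using l cpos
    by (simp add: field_simps)
qed



theorem mainTheorem1:
  fixes lam :: real
  assumes "lam > 0"
  shows "gini (ztp_pmf lam) =
           1 - (2 * exp (- lam) / (1 - exp (- lam)))
                 * integral {0..lam} (\<lambda>t. bessel_I 0 (2 * sqrt (lam * t)) * exp (- t))
             + (exp (- 2 * lam) / (1 - exp (- lam))) * bessel_I 1 (2 * lam)"
proof -
  define q where "q = exp (- lam)"
  define I where "I = integral {0..lam} (\<lambda>t. bessel_I 0 (2 * sqrt (lam * t)) * exp (- t))"
  define J where "J = bessel_I 1 (2 * lam)"
  have q: "0 < q" "q < 1" unfolding q_def using assms by auto
  have hI: "q * I = 1 - AA lam" unfolding q_def I_def by (rule integral_part[OF assms])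
  have hJ: "q * q * J = FF lam" unfolding q_def J_def by (rule bessel1_eq[OF assms])
  have hA: "2 * AA lam = 1 + EE lam" using assms by (intro AA_eq) simp
  have e2: "exp (- 2 * lam) = q * q" unfolding q_def by (simp add: exp_add[symmetric])
  have g: "gini (ztp_pmf lam) = (1 / (1 - q)) * (EE lam + FF lam - q)"
    unfolding q_def by (rule main_calc[OF assms])
  have "1 - (2 * q / (1 - q)) * I + (q * q / (1 - q)) * J
        = 1 - 2 * (q * I) / (1 - q) + (q * q * J) / (1 - q)" by (simp add: field_simps)
  also have "\<dots> = 1 - (1 - EE lam) / (1 - q) + FF lam / (1 - q)"
  proof -
    have h: "2 * (1 - AA lam) = 1 - EE lam" using hA by simp
    show ?thesis unfolding hI hJ h ..
  qed
  also have "\<dots> = (1 / (1 - q)) * (EE lam + FF lam - q)"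
  proof -
    have gen: "\<And>D a b :: real. D \<noteq> 0 \<Longrightarrow> 1 - a / D + b / D = (1 / D) * (D - a + b)"
      by (simp add: field_simps)
    have "1 - q \<noteq> 0" using q by simp
    from gen[OF this] show ?thesis by simp
  qed
  finally show ?thesis unfolding g e2 q_def[symmetric] I_def[symmetric] J_def[symmetric] by simp
qed


end
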